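(* The rules (mix) and (sc$_n$) ($n\ge2$) are $\mathsf{GK(A_m)^r}$-admissible: for all finite multisets $\Gamma,\Delta,\Pi,\Sigma$ of $\mathcal{L}_{A_m}^{\Box}$-formulas, if $\Gamma\Rightarrow\Delta$ and $\Pi\Rightarrow\Sigma$ are $\mathsf{GK(A_m)^r}$-derivable then so is $\Gamma,\Pi\Rightarrow\Sigma,\Delta$; and for every $n\ge2$, if $n\Gamma\Rightarrow n\Delta$ is $\mathsf{GK(A_m)^r}$-derivable then so is $\Gamma\Rightarrow\Delta$.
   Context: $\mathcal{L}_{A_m}^{\Box}$-formulas are built from a countably infinite set of variables using binary $\to$ and unary $\Box$. A sequent $\Gamma\Rightarrow\Delta$ is an ordered pair of finite multisets of formulas; $\Gamma,\Delta$ is multiset union, $n\Gamma$ is $\Gamma$ repeated $n$ times, $n[\varphi]$ is $n$ copies of $\varphi$, $\Box\Gamma=[\Box\varphi:\varphi\in\Gamma]$. The calculus $\mathsf{GK(A_m)^r}$ has the rules: (id) $\Delta\Rightarrow\Delta$ (no premises); ($\to\Rightarrow$) from $\Gamma,\psi\Rightarrow\varphi,\Delta$ infer $\Gamma,\varphi\to\psi\Rightarrow\Delta$; ($\Rightarrow\to$) from $\Gamma,\varphi\Rightarrow\psi,\Delta$ infer $\Gamma\Rightarrow\varphi\to\psi,\Delta$; and for each $k\ge1$, $n\ge0$ the rule ($\Box_{k,n}$): from $\Gamma_0\Rightarrow$ and $\Gamma_i\Rightarrow k[\varphi_i]$ ($i=1,\dots,n$) infer $\Delta,\Box\Gamma\Rightarrow\Box\varphi_1,\dots,\Box\varphi_n,\Delta$,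 where $k\Gamma=\Gamma_0\uplus\Gamma_1\uplus\dots\uplus\Gamma_n$. A derivation is a finite tree of sequents in which each node with its parents is a rule instance. *)

theory Defs
  imports Main "HOL-Library.Multiset"
begin

datatype fm = Var nat | Imp fm fm | Box fm

type_synonym sequent = "fm multiset \<times> fm multiset"

definition mrep :: "nat \<Rightarrow> 'a multiset \<Rightarrow> 'a multiset" where
  "mrep n M = repeat_mset n M"

inductive derivable :: "fm multiset \<Rightarrow> fm multiset \<Rightarrow> bool" where
  id: "derivable D D"
| imp_L: "derivable (G + {#psi#}) ({#phi#} + D) \<Longrightarrow> derivable (G + {#Imp phi psi#}) D"
| imp_R: "derivable (G + {#phi#}) ({#psi#} + D) \<Longrightarrow> derivable G ({#Imp phi psi#} + D)"
| box: "\<lbrakk> k \<ge> 1;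
          mrep k G = G0 + sum_list (map fst ps);
          derivable G0 {#};
          \<forall>(Gi, phi) \<in> set ps. derivable Gi (replicate_mset k phi) \<rbrakk>
        \<Longrightarrow> derivable (D + image_mset Box G) (mset (map (\<lambda>(Gi, phi). Box phi) ps) + D)"

end

theory Submission
  imports Defs
begin

lemma impL_rep:
  "derivable (X + replicate_mset j psi) (replicate_mset j phi + Y)
   \<Longrightarrow> derivable (X + replicate_mset j (Imp phi psi)) Y"
proof (induction j arbitrary: X Y)
  case 0
  then show ?case by simp
next
  case (Suc j)
  have "derivable ((X + replicate_mset j psi) + {#psi#}) ({#phi#} + (replicate_mset j phi + Y))"
    using Suc.prems by (simp add: add_ac)
  then have "derivable ((X + replicate_mset j psi) + {#Imp phi psi#}) (replicate_mset j phi + Y)"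
    by (rule derivable.imp_L)
  then have "derivable ((X + {#Imp phi psi#}) + replicate_mset j psi) (replicate_mset j phi + Y)"
    by (simp add: add_ac)
  then have "derivable ((X + {#Imp phi psi#}) + replicate_mset j (Imp phi psi)) Y"
    by (rule Suc.IH)
  then show ?case by (simp add: add_ac)
qed

lemma impR_rep:
  "derivable (X + replicate_mset j phi) (replicate_mset j psi + Y)
   \<Longrightarrow> derivable X (replicate_mset j (Imp phi psi) + Y)"
proof (induction j arbitrary: X Y)
  case 0
  then show ?case by simp
next
  case (Suc j)
  have "derivable ((X + replicate_mset j phi) + {#phi#}) ({#psi#} + (replicate_mset j psi + Y))"
    using Suc.prems by (simp add: add_ac)
  then have "derivable (X + replicate_mset j phi) ({#Imp phi psi#} + (replicate_mset j psi + Y))"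
    by (rule derivable.imp_R)
  then have "derivable (X + replicate_mset j phi) (replicate_mset j psi + ({#Imp phi psi#} + Y))"
    by (simp add: add_ac)
  then have "derivable X (replicate_mset j (Imp phi psi) + ({#Imp phi psi#} + Y))"
    by (rule Suc.IH)
  then show ?case by (simp add: add_ac)
qed

lemma sum_mset_repeat: "sum_mset (repeat_mset m X) = repeat_mset m (sum_mset X)"
  by (induction m) auto

lemma in_repeat: "x \<in># repeat_mset m X \<Longrightarrow> x \<in># X"
  by (metis count_greater_zero_iff count_repeat_mset nat_0_less_mult_iff)

lemma image_repeat: "image_mset f (repeat_mset m X) = repeat_mset m (image_mset f X)"
  by (induction m) auto

lemma box_list_mset:
  "mset (map (\<lambda>(Gi, phi). Box phi) ps) = image_mset Box (image_mset snd (mset ps))"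
  by (induction ps) auto

lemma box_mset:
  assumes "k \<ge> 1" "repeat_mset k G = G0 + sum_mset (image_mset fst Ps)"
    "derivable G0 {#}" "\<forall>p\<in>#Ps. derivable (fst p) (replicate_mset k (snd p))"
  shows "derivable (D + image_mset Box G) (image_mset Box (image_mset snd Ps) + D)"
proof -
  obtain ps where ps: "mset ps = Ps" using ex_mset by blast
  have 1: "mrep k G = G0 + sum_list (map fst ps)"
    using assms(2) ps by (simp add: mrep_def flip: sum_mset_sum_list)
  have 2: "\<forall>(Gi, phi) \<in> set ps. derivable Gi (replicate_mset k phi)"
    using assms(4) ps by fastforce
  have "derivable (D + image_mset Box G) (mset (map (\<lambda>(Gi, phi). Box phi) ps) + D)"
    by (rule derivable.box[OF assms(1) 1 assms(3) 2])
  moreover have "mset (map (\<lambda>(Gi, phi). Box phi) ps) = image_mset Box (image_mset snd Ps)"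
    using ps[symmetric] box_list_mset by simp
  ultimately show ?thesis by simp
qed

lemma scale: "derivable G D \<Longrightarrow> derivable (repeat_mset m G) (repeat_mset m D)"
proof (induction rule: derivable.induct)
  case (id D)
  then show ?case by (rule derivable.id)
next
  case (imp_L G psi phi D)
  then have "derivable (repeat_mset m G + replicate_mset m psi) (replicate_mset m phi + repeat_mset m D)"
    by (simp add: add_ac)
  then have "derivable (repeat_mset m G + replicate_mset m (Imp phi psi)) (repeat_mset m D)"
    by (rule impL_rep)
  then show ?case by (simp add: add_ac)
next
  case (imp_R G phi psi D)
  then have "derivable (repeat_mset m G + replicate_mset m phi) (replicate_mset m psi + repeat_mset m D)"
    by (simp add: add_ac)
  then have "derivable (repeat_mset m G) (replicate_mset m (Imp phi psi) + repeat_mset m D)"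
    by (rule impR_rep)
  then show ?case by simp
next
  case (box k G G0 ps D)
  let ?Ps = "repeat_mset m (mset ps)"
  have e: "repeat_mset k (repeat_mset m G) = repeat_mset m (repeat_mset k G)"
    by (simp add: mult.commute)
  have a: "repeat_mset k (repeat_mset m G) = repeat_mset m G0 + sum_mset (image_mset fst ?Ps)"
    unfolding e using box(2) by (simp add: mrep_def image_repeat sum_mset_repeat sum_mset_sum_list[symmetric])
  have b: "derivable (repeat_mset m G0) {#}" using box(4) by simp
  have c: "\<forall>p\<in>#?Ps. derivable (fst p) (replicate_mset k (snd p))"
    using box(5) by (fastforce dest: in_repeat)
  have "derivable (repeat_mset m D + image_mset Box (repeat_mset m G))
     (image_mset Box (image_mset snd ?Ps) + repeat_mset m D)"
    by (rule box_mset[OF box(1) a b c])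
  then show ?case unfolding box_list_mset by (simp add: image_repeat)
qed

lemma sum_image_repeat:
  "sum_mset (image_mset (\<lambda>p. repeat_mset k (f p)) A) = repeat_mset k (sum_mset (image_mset f A))"
  by (induction A) auto

lemma replicate_plus: "replicate_mset (a + b) x = replicate_mset a x + replicate_mset b x"
  by (induction a) auto

lemma repeat_replicate: "repeat_mset k (replicate_mset j x) = replicate_mset (k * j) x"
  by (induction k) (auto simp: replicate_plus)

lemma zero_iter:
  assumes d0: "\<forall>P S. derivable P S \<longrightarrow> derivable (G0 + P) S"
  shows "derivable X {#} \<Longrightarrow> derivable (repeat_mset j G0 + X) {#}"
proof (induction j)
  case 0
  then show ?case by simp
next
  case (Suc j)
  then have "derivable (G0 + (repeat_mset j G0 + X)) {#}" using d0 by blast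
  then show ?case by (simp add: add_ac)
qed

lemma mix_box:
  assumes ka: "ka \<ge> 1" and e1: "repeat_mset ka Ga = Za + sum_mset (image_mset fst Ps)"
  and d0: "\<forall>P S. derivable P S \<longrightarrow> derivable (Za + P) S"
  and dPs: "\<forall>p\<in>#Ps. derivable (fst p) (replicate_mset ka (snd p))"
  and "derivable P S"
  shows "derivable (D' + image_mset Box Ga + P) (S + image_mset Box (image_mset snd Ps) + D')"
  using assms(5)
proof (induction rule: derivable.induct)
  have g0: "derivable Za {#}" using d0 derivable.id[of "{#}"] by force
  case (id P)
  have "derivable ((D' + P) + image_mset Box Ga) (image_mset Box (image_mset snd Ps) + (D' + P))"
    by (rule box_mset[OF ka e1 g0 dPs])
  then show ?case by (simp add: add_ac)
next
  case (imp_L G psi phi D)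
  have "derivable ((D' + image_mset Box Ga + G) + {#psi#})
     ({#phi#} + (D + image_mset Box (image_mset snd Ps) + D'))"
    using imp_L.IH by (simp add: add_ac)
  then have "derivable ((D' + image_mset Box Ga + G) + {#Imp phi psi#})
     (D + image_mset Box (image_mset snd Ps) + D')"
    by (rule derivable.imp_L)
  then show ?case by (simp add: add_ac)
next
  case (imp_R G phi psi D)
  have "derivable ((D' + image_mset Box Ga + G) + {#phi#})
     ({#psi#} + (D + image_mset Box (image_mset snd Ps) + D'))"
    using imp_R.IH by (simp add: add_ac)
  then have "derivable (D' + image_mset Box Ga + G)
     ({#Imp phi psi#} + (D + image_mset Box (image_mset snd Ps) + D'))"
    by (rule derivable.imp_R)
  then show ?case by (simp add: add_ac)
next
  case (box k G H0 qs D)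
  let ?Ps = "image_mset (\<lambda>p. (repeat_mset k (fst p), snd p)) Ps
     + image_mset (\<lambda>q. (repeat_mset ka (fst q), snd q)) (mset qs)"
  let ?Za = "repeat_mset k Za + repeat_mset ka H0"
  have K: "ka * k \<ge> 1" using ka box(1) by simp
  have "repeat_mset (ka * k) (Ga + G) = repeat_mset k (repeat_mset ka Ga) + repeat_mset ka (repeat_mset k G)"
    by (simp add: mult.commute)
  also have "\<dots> = repeat_mset k (Za + sum_mset (image_mset fst Ps)) + repeat_mset ka (H0 + sum_mset (image_mset fst (mset qs)))"
    using box(2) unfolding e1 by (simp add: mrep_def sum_mset_sum_list[symmetric])
  also have "\<dots> = ?Za + sum_mset (image_mset fst ?Ps)"
  proof -
    have f: "image_mset fst ?Ps = image_mset (\<lambda>p. repeat_mset k (fst p)) Ps + image_mset (\<lambda>q. repeat_mset ka (fst q)) (mset qs)"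
      by (simp add: multiset.map_comp comp_def)
    show ?thesis unfolding f sum_mset.union sum_image_repeat repeat_mset_distrib2 by (simp only: add_ac)
  qed
  finally have E: "repeat_mset (ka * k) (Ga + G) = ?Za + sum_mset (image_mset fst ?Ps)" .
  have "derivable (repeat_mset ka H0) (repeat_mset ka {#})" using box(3) by (rule scale)
  then have G0d: "derivable ?Za {#}" using zero_iter[OF d0] by simp
  have Pd: "\<forall>p\<in>#?Ps. derivable (fst p) (replicate_mset (ka * k) (snd p))"
  proof
    fix p assume "p \<in># ?Ps"
    then consider (a) q where "q \<in># Ps" "p = (repeat_mset k (fst q), snd q)"
      | (b) q where "q \<in> set qs" "p = (repeat_mset ka (fst q), snd q)" by auto
    then show "derivable (fst p) (replicate_mset (ka * k) (snd p))"
    proof cases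
      case a
      then have "derivable (repeat_mset k (fst q)) (repeat_mset k (replicate_mset ka (snd q)))"
        using dPs scale by blast
      then show ?thesis using a by (simp add: repeat_replicate mult.commute)
    next
      case b
      then have "derivable (fst q) (replicate_mset k (snd q))" using box(5) by auto
      then have "derivable (repeat_mset ka (fst q)) (repeat_mset ka (replicate_mset k (snd q)))"
        by (rule scale)
      then show ?thesis using b by (simp add: repeat_replicate)
    qed
  qed
  have H: "derivable ((D' + D) + image_mset Box (Ga + G)) (image_mset Box (image_mset snd ?Ps) + (D' + D))"
    by (rule box_mset[OF K E G0d Pd])
  have s: "image_mset snd ?Ps = image_mset snd Ps + image_mset snd (mset qs)"
    by (simp add: multiset.map_comp comp_def)
  have eq1: "D' + D + image_mset Box (Ga + G) = D' + image_mset Box Ga + (D + image_mset Box G)"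
    by (simp only: image_mset_union add_ac)
  have eq2: "image_mset Box (image_mset snd Ps + image_mset snd (mset qs)) + (D' + D)
     = image_mset Box (image_mset snd (mset qs)) + D + image_mset Box (image_mset snd Ps) + D'"
    by (simp only: image_mset_union add_ac)
  show ?case unfolding box_list_mset using H unfolding s eq1 eq2 .
qed

lemma mix_all: "derivable G D \<Longrightarrow> \<forall>P S. derivable P S \<longrightarrow> derivable (G + P) (S + D)"
proof (induction rule: derivable.induct)
  case (id D)
  show ?case
  proof (intro allI impI)
    fix P S assume "derivable P S"
    then have "derivable (D + image_mset Box {#} + P) (S + image_mset Box (image_mset snd ({#} :: (fm multiset \<times> fm) multiset)) + D)"
      by (intro mix_box[where Za="{#}" and ka=1]) auto
    then show "derivable (D + P) (S + D)" by simp
  qed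
next
  case (imp_L G psi phi D)
  show ?case
  proof (intro allI impI)
    fix P S assume "derivable P S"
    then have "derivable ((G + P) + {#psi#}) ({#phi#} + (S + D))"
      using imp_L.IH by (metis add.assoc add.commute)
    then have "derivable ((G + P) + {#Imp phi psi#}) (S + D)" by (rule derivable.imp_L)
    then show "derivable (G + {#Imp phi psi#} + P) (S + D)" by (simp add: add_ac)
  qed
next
  case (imp_R G phi psi D)
  show ?case
  proof (intro allI impI)
    fix P S assume "derivable P S"
    then have "derivable ((G + P) + {#phi#}) ({#psi#} + (S + D))"
      using imp_R.IH by (metis add.assoc add.commute)
    then have "derivable (G + P) ({#Imp phi psi#} + (S + D))" by (rule derivable.imp_R)
    then show "derivable (G + P) (S + ({#Imp phi psi#} + D))" by (simp add: add_ac)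
  qed
next
  case (box k G G0 ps D)
  show ?case
  proof (intro allI impI)
    fix P S assume PS: "derivable P S"
    have e1: "repeat_mset k G = G0 + sum_mset (image_mset fst (mset ps))"
      using box(2) by (simp add: mrep_def sum_mset_sum_list[symmetric])
    have d0: "\<forall>P S. derivable P S \<longrightarrow> derivable (G0 + P) S" using box(4) by simp
    have dPs: "\<forall>p\<in>#mset ps. derivable (fst p) (replicate_mset k (snd p))" using box(5) by auto
    have "derivable (D + image_mset Box G + P) (S + image_mset Box (image_mset snd (mset ps)) + D)"
      by (rule mix_box[OF box(1) e1 d0 dPs PS])
    then show "derivable (D + image_mset Box G + P) (S + (mset (map (\<lambda>(Gi, phi). Box phi) ps) + D))"
      unfolding box_list_mset by (simp add: add_ac)
  qed
qed

lemma mix: "derivable G D \<Longrightarrow> derivable P S \<Longrightarrow> derivable (G + P) (S + D)"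
  using mix_all by blast

definition BP :: "nat \<Rightarrow> fm multiset \<Rightarrow> fm multiset \<Rightarrow> bool" where
  "BP k G Phi \<longleftrightarrow> k \<ge> 1 \<and> (\<exists>Z Ps. repeat_mset k G = Z + sum_mset (image_mset fst Ps)
     \<and> derivable Z {#} \<and> (\<forall>p\<in>#Ps. derivable (fst p) (replicate_mset k (snd p)))
     \<and> Phi = image_mset snd Ps)"

lemma BP_box: "BP k G Phi \<Longrightarrow> derivable (D + image_mset Box G) (image_mset Box Phi + D)"
  unfolding BP_def using box_mset by blast

lemma BP_of_rule:
  assumes "k \<ge> 1" "mrep k G = G0 + sum_list (map fst ps)" "derivable G0 {#}"
    "\<forall>(Gi, phi) \<in> set ps. derivable Gi (replicate_mset k phi)"
  shows "BP k G (image_mset snd (mset ps))"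
  unfolding BP_def
proof (intro conjI exI)
  show "repeat_mset k G = G0 + sum_mset (image_mset fst (mset ps))"
    using assms(2) by (simp add: mrep_def sum_mset_sum_list[symmetric])
  show "\<forall>p\<in>#mset ps. derivable (fst p) (replicate_mset k (snd p))" using assms(4) by auto
qed (use assms in auto)

lemma sum_replicate_image: "sum_mset (image_mset (\<lambda>e. replicate_mset k e) E) = repeat_mset k E"
  by (induction E) auto

lemma BP_ext: "BP k G Phi \<Longrightarrow> BP k (G + E) (Phi + E)"
  unfolding BP_def
proof (elim conjE exE)
  fix Z Ps
  assume h: "1 \<le> k" "repeat_mset k G = Z + sum_mset (image_mset fst Ps)" "derivable Z {#}"
    "\<forall>p\<in>#Ps. derivable (fst p) (replicate_mset k (snd p))" "Phi = image_mset snd Ps"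
  let ?Q = "Ps + image_mset (\<lambda>e. (replicate_mset k e, e)) E"
  have 1: "repeat_mset k (G + E) = Z + sum_mset (image_mset fst ?Q)"
    using h(2) by (simp add: multiset.map_comp comp_def sum_replicate_image add_ac)
  have 2: "\<forall>p\<in>#?Q. derivable (fst p) (replicate_mset k (snd p))"
    using h(4) by (auto intro: derivable.id)
  have 3: "Phi + E = image_mset snd ?Q" using h(5) by (simp add: multiset.map_comp comp_def)
  show "1 \<le> k \<and> (\<exists>Z Ps. repeat_mset k (G + E) = Z + sum_mset (image_mset fst Ps) \<and>
         derivable Z {#} \<and> (\<forall>p\<in>#Ps. derivable (fst p) (replicate_mset k (snd p))) \<and>
         Phi + E = image_mset snd Ps)"
    using h(1,3) 1 2 3 by (intro conjI exI[of _ Z] exI[of _ ?Q]) assumption+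
qed

lemma combine:
  "(\<forall>p\<in>#Q. snd p = y \<and> derivable (fst p) (replicate_mset k y))
   \<Longrightarrow> derivable (sum_mset (image_mset fst Q)) (replicate_mset (size Q * k) y)"
proof (induction Q)
  case empty
  then show ?case using derivable.id[of "{#}"] by simp
next
  case (add q Q)
  then have a: "derivable (fst q) (replicate_mset k y)"
    and b: "derivable (sum_mset (image_mset fst Q)) (replicate_mset (size Q * k) y)" by auto
  have "derivable (fst q + sum_mset (image_mset fst Q)) (replicate_mset (size Q * k) y + replicate_mset k y)"
    by (rule mix[OF a b])
  then show ?case by (simp add: replicate_plus add_ac)
qed

lemma group:
  "\<forall>Ps. image_mset snd Ps = repeat_mset n B \<longrightarrow>
     (\<forall>p\<in>#Ps. derivable (fst p) (replicate_mset k (snd p))) \<longrightarrow>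
     (\<exists>Qs. image_mset snd Qs = B \<and> sum_mset (image_mset fst Qs) = sum_mset (image_mset fst Ps)
        \<and> (\<forall>q\<in>#Qs. derivable (fst q) (replicate_mset (n * k) (snd q))))"
proof (induction B)
  case empty
  then show ?case by (intro allI impI exI[of _ "{#}"]) auto
next
  case (add y B)
  show ?case
  proof (intro allI impI)
    fix Ps
    assume e: "image_mset snd Ps = repeat_mset n (add_mset y B)"
      and d: "\<forall>p\<in>#Ps. derivable (fst p) (replicate_mset k (snd p))"
    from e have "image_mset snd Ps = replicate_mset n y + repeat_mset n B" by simp
    then obtain P1 P2 where P: "Ps = P1 + P2" "replicate_mset n y = image_mset snd P1"
      "repeat_mset n B = image_mset snd P2"
      using image_mset_eq_plusD by blast
    obtain Q2 where Q2: "image_mset snd Q2 = B" "sum_mset (image_mset fst Q2) = sum_mset (image_mset fst P2)"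
      "\<forall>q\<in>#Q2. derivable (fst q) (replicate_mset (n * k) (snd q))"
      using add.IH P(1,3) d by force
    have "\<forall>p\<in>#P1. snd p = y \<and> derivable (fst p) (replicate_mset k y)"
    proof
      fix p assume p: "p \<in># P1"
      then have "snd p \<in># replicate_mset n y" using P(2) by simp
      then have "snd p = y" by (cases "n = 0") auto
      then show "snd p = y \<and> derivable (fst p) (replicate_mset k y)" using d p P(1) by auto
    qed
    then have c: "derivable (sum_mset (image_mset fst P1)) (replicate_mset (size P1 * k) y)"
      by (rule combine)
    have sz: "size P1 = n" using P(2) by (metis size_image_mset size_replicate_mset)
    show "\<exists>Qs. image_mset snd Qs = add_mset y B \<and> sum_mset (image_mset fst Qs) = sum_mset (image_mset fst Ps)
        \<and> (\<forall>q\<in>#Qs. derivable (fst q) (replicate_mset (n * k) (snd q)))"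
      by (rule exI[of _ "add_mset (sum_mset (image_mset fst P1), y) Q2"]) (use Q2 P(1) c sz in auto)
  qed
qed

lemma BP_root: "n \<ge> 1 \<Longrightarrow> BP k (repeat_mset n A) (repeat_mset n B) \<Longrightarrow> BP (n * k) A B"
  unfolding BP_def
proof (elim conjE exE)
  fix Z Ps
  assume n: "n \<ge> 1" and h: "1 \<le> k" "repeat_mset k (repeat_mset n A) = Z + sum_mset (image_mset fst Ps)" "derivable Z {#}"
    "\<forall>p\<in>#Ps. derivable (fst p) (replicate_mset k (snd p))" "repeat_mset n B = image_mset snd Ps"
  obtain Qs where Q: "image_mset snd Qs = B" "sum_mset (image_mset fst Qs) = sum_mset (image_mset fst Ps)"
        "\<forall>q\<in>#Qs. derivable (fst q) (replicate_mset (n * k) (snd q))"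
    using group h(4,5) by metis
  have e: "repeat_mset (n * k) A = Z + sum_mset (image_mset fst Qs)"
    using h(2) Q(2) by (simp add: mult.commute)
  have k: "1 \<le> n * k" using n h(1) by simp
  show "1 \<le> n * k \<and> (\<exists>Z Ps. repeat_mset (n * k) A = Z + sum_mset (image_mset fst Ps) \<and>
         derivable Z {#} \<and> (\<forall>p\<in>#Ps. derivable (fst p) (replicate_mset (n * k) (snd p))) \<and>
         B = image_mset snd Ps)"
    using k e h(3) Q(1,3) by (intro conjI exI[of _ Z] exI[of _ Qs]) (assumption | rule sym, assumption)+
qed


lemma box_not_imp: "Imp a b \<in># image_mset Box X \<Longrightarrow> False"
  by auto

lemma invL: "derivable G D \<Longrightarrow> \<forall>X. G = add_mset (Imp a b) X \<longrightarrow> derivable (add_mset b X) (add_mset a D)"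
proof (induction rule: derivable.induct)
  case (id D)
  show ?case
  proof (intro allI impI)
    fix X assume X: "D = add_mset (Imp a b) X"
    have "derivable (add_mset b X + {#a#}) ({#b#} + (add_mset a X))"
      using derivable.id[of "add_mset a (add_mset b X)"] by (simp add: add_mset_commute)
    then have "derivable (add_mset b X) ({#Imp a b#} + add_mset a X)" by (rule derivable.imp_R)
    then show "derivable (add_mset b X) (add_mset a D)" using X by (simp add: add_mset_commute)
  qed
next
  case (imp_L G psi phi D)
  show ?case
  proof (intro allI impI)
    fix X assume X: "G + {#Imp phi psi#} = add_mset (Imp a b) X"
    then have "add_mset (Imp phi psi) G = add_mset (Imp a b) X" by simp
    then consider (eq) "G = X" "Imp phi psi = Imp a b"
      | (ne) K where "G = add_mset (Imp a b) K" "X = add_mset (Imp phi psi) K"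
      unfolding add_eq_conv_ex by blast
    then show "derivable (add_mset b X) (add_mset a D)"
    proof cases
      case eq
      then show ?thesis using imp_L.hyps by simp
    next
      case ne
      then have "derivable (add_mset b (add_mset psi K)) (add_mset a ({#phi#} + D))"
        using imp_L.IH by (simp add: add_mset_commute)
      then have "derivable (add_mset b K + {#psi#}) ({#phi#} + add_mset a D)"
        by (simp add: add_mset_commute)
      then have "derivable (add_mset b K + {#Imp phi psi#}) (add_mset a D)"
        by (rule derivable.imp_L)
      then show ?thesis using ne by (simp add: add_mset_commute)
    qed
  qed
next
  case (imp_R G phi psi D)
  show ?case
  proof (intro allI impI)
    fix X assume X: "G = add_mset (Imp a b) X"
    then have "derivable (add_mset b (add_mset phi X)) (add_mset a ({#psi#} + D))"
      using imp_R.IH by (simp add: add_mset_commute)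
    then have "derivable (add_mset b X + {#phi#}) ({#psi#} + add_mset a D)"
      by (simp add: add_mset_commute)
    then have "derivable (add_mset b X) ({#Imp phi psi#} + add_mset a D)"
      by (rule derivable.imp_R)
    then show "derivable (add_mset b X) (add_mset a ({#Imp phi psi#} + D))"
      by (simp add: add_mset_commute)
  qed
next
  case (box k G G0 ps D)
  have bp: "BP k G (image_mset snd (mset ps))"
    using box(5) by (intro BP_of_rule[OF box(1) box(2) box(3)]) auto
  show ?case
  proof (intro allI impI)
    fix X assume X: "D + image_mset Box G = add_mset (Imp a b) X"
    then have "Imp a b \<in># D + image_mset Box G" by simp
    then have "Imp a b \<in># D" using box_not_imp[of a b G] by (simp only: union_iff) blast
    then obtain D2 where D2: "D = add_mset (Imp a b) D2" by (metis multi_member_split)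
    then have XX: "X = D2 + image_mset Box G" using X by simp
    have "derivable (add_mset a (add_mset b D2) + image_mset Box G)
       (image_mset Box (image_mset snd (mset ps)) + add_mset a (add_mset b D2))"
      by (rule BP_box[OF bp])
    then have "derivable (add_mset b (D2 + image_mset Box G) + {#a#})
       ({#b#} + (add_mset a (image_mset Box (image_mset snd (mset ps)) + D2)))"
      by (simp add: add_mset_commute add_ac)
    then have "derivable (add_mset b (D2 + image_mset Box G))
       ({#Imp a b#} + (add_mset a (image_mset Box (image_mset snd (mset ps)) + D2)))"
      by (rule derivable.imp_R)
    then show "derivable (add_mset b X) (add_mset a (mset (map (\<lambda>(Gi, phi). Box phi) ps) + D))"
      unfolding box_list_mset XX D2 by (simp add: add_mset_commute add_ac)
  qed
qed

lemma invR: "derivable G D \<Longrightarrow> \<forall>Y. D = add_mset (Imp a b) Y \<longrightarrow> derivable (add_mset a G) (add_mset b Y)"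
proof (induction rule: derivable.induct)
  case (id D)
  show ?case
  proof (intro allI impI)
    fix Y assume Y: "D = add_mset (Imp a b) Y"
    have "derivable (add_mset a Y + {#b#}) ({#a#} + add_mset b Y)"
      using derivable.id[of "add_mset a (add_mset b Y)"] by (simp add: add_mset_commute)
    then have "derivable (add_mset a Y + {#Imp a b#}) (add_mset b Y)" by (rule derivable.imp_L)
    then show "derivable (add_mset a D) (add_mset b Y)" using Y by (simp add: add_mset_commute)
  qed
next
  case (imp_L G psi phi D)
  show ?case
  proof (intro allI impI)
    fix Y assume Y: "D = add_mset (Imp a b) Y"
    then have "derivable (add_mset a (G + {#psi#})) (add_mset b (add_mset phi Y))"
      using imp_L.IH by (simp add: add_mset_commute)
    then have "derivable (add_mset a G + {#psi#}) ({#phi#} + add_mset b Y)"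
      by (simp add: add_mset_commute)
    then have "derivable (add_mset a G + {#Imp phi psi#}) (add_mset b Y)"
      by (rule derivable.imp_L)
    then show "derivable (add_mset a (G + {#Imp phi psi#})) (add_mset b Y)"
      by (simp add: add_mset_commute)
  qed
next
  case (imp_R G phi psi D)
  show ?case
  proof (intro allI impI)
    fix Y assume Y: "{#Imp phi psi#} + D = add_mset (Imp a b) Y"
    then have "add_mset (Imp phi psi) D = add_mset (Imp a b) Y" by simp
    then consider (eq) "D = Y" "Imp phi psi = Imp a b"
      | (ne) K where "D = add_mset (Imp a b) K" "Y = add_mset (Imp phi psi) K"
      unfolding add_eq_conv_ex by blast
    then show "derivable (add_mset a G) (add_mset b Y)"
    proof cases
      case eq
      then show ?thesis using imp_R.hyps by simp
    next
      case ne
      then have "derivable (add_mset a (G + {#phi#})) (add_mset b (add_mset psi K))"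
        using imp_R.IH by (simp add: add_mset_commute)
      then have "derivable (add_mset a G + {#phi#}) ({#psi#} + add_mset b K)"
        by (simp add: add_mset_commute)
      then have "derivable (add_mset a G) ({#Imp phi psi#} + add_mset b K)"
        by (rule derivable.imp_R)
      then show ?thesis using ne by (simp add: add_mset_commute)
    qed
  qed
next
  case (box k G G0 ps D)
  have bp: "BP k G (image_mset snd (mset ps))"
    using box(5) by (intro BP_of_rule[OF box(1) box(2) box(3)]) auto
  show ?case
  proof (intro allI impI)
    fix Y assume Y: "mset (map (\<lambda>(Gi, phi). Box phi) ps) + D = add_mset (Imp a b) Y"
    then have Y': "image_mset Box (image_mset snd (mset ps)) + D = add_mset (Imp a b) Y"
      unfolding box_list_mset .
    then have "Imp a b \<in># image_mset Box (image_mset snd (mset ps)) + D"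
      by simp
    then have "Imp a b \<in># D" using box_not_imp[of a b "image_mset snd (mset ps)"] by (simp only: union_iff) blast
    then obtain D2 where D2: "D = add_mset (Imp a b) D2" by (metis multi_member_split)
    then have YY: "Y = image_mset Box (image_mset snd (mset ps)) + D2" using Y' by simp
    have "derivable (add_mset a (add_mset b D2) + image_mset Box G)
       (image_mset Box (image_mset snd (mset ps)) + add_mset a (add_mset b D2))"
      by (rule BP_box[OF bp])
    then have "derivable (add_mset a (D2 + image_mset Box G) + {#b#})
       ({#a#} + (add_mset b (image_mset Box (image_mset snd (mset ps)) + D2)))"
      by (simp add: add_mset_commute add_ac)
    then have "derivable (add_mset a (D2 + image_mset Box G) + {#Imp a b#})
       (add_mset b (image_mset Box (image_mset snd (mset ps)) + D2))"
      by (rule derivable.imp_L)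
    then show "derivable (add_mset a (D + image_mset Box G)) (add_mset b Y)"
      unfolding YY D2 by (simp add: add_mset_commute add_ac)
  qed
qed

lemma invL_rep:
  "derivable (X + replicate_mset j (Imp a b)) Y
   \<Longrightarrow> derivable (X + replicate_mset j b) (replicate_mset j a + Y)"
proof (induction j arbitrary: X Y)
  case 0
  then show ?case by simp
next
  case (Suc j)
  have "derivable (add_mset b (X + replicate_mset j (Imp a b))) (add_mset a Y)"
    using invL[OF Suc.prems] by (simp add: add_ac)
  then have "derivable ((add_mset b X) + replicate_mset j (Imp a b)) (add_mset a Y)" by simp
  then have "derivable ((add_mset b X) + replicate_mset j b) (replicate_mset j a + add_mset a Y)"
    by (rule Suc.IH)
  then show ?case by simp
qed

lemma invR_rep:
  "derivable X (replicate_mset j (Imp a b) + Y)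
   \<Longrightarrow> derivable (X + replicate_mset j a) (replicate_mset j b + Y)"
proof (induction j arbitrary: X Y)
  case 0
  then show ?case by simp
next
  case (Suc j)
  have "derivable (add_mset a X) (add_mset b (replicate_mset j (Imp a b) + Y))"
    using invR[OF Suc.prems] by (simp add: add_ac)
  then have "derivable (add_mset a X) (replicate_mset j (Imp a b) + add_mset b Y)" by simp
  then have "derivable (add_mset a X + replicate_mset j a) (replicate_mset j b + add_mset b Y)"
    by (rule Suc.IH)
  then show ?case by simp
qed

fun isBox :: "fm \<Rightarrow> bool" where
  "isBox (Box x) = True"
| "isBox _ = False"

fun unbox :: "fm \<Rightarrow> fm" where
  "unbox (Box x) = x"
| "unbox x = x"

lemma decomp: "M = filter_mset (\<lambda>f. \<not> isBox f) M + image_mset Box (image_mset unbox (filter_mset isBox M))"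
proof (induction M)
  case empty
  then show ?case by simp
next
  case (add x M)
  then show ?case by (cases x) (auto simp: add_ac)
qed

lemma filter_box_image: "filter_mset isBox (image_mset Box X) = image_mset Box X"
  by (induction X) auto

lemma filter_nbox_image: "filter_mset (\<lambda>f. \<not> isBox f) (image_mset Box X) = {#}"
  by (induction X) auto

lemma filter_repeat: "filter_mset P (repeat_mset n M) = repeat_mset n (filter_mset P M)"
  by (induction n) auto

lemma unbox_box: "image_mset unbox (image_mset Box X) = X"
  by (induction X) auto

lemma atomic:
  assumes n: "n \<ge> 1" and aG: "\<forall>f\<in>#G. \<forall>a b. f \<noteq> Imp a b" and aD: "\<forall>f\<in>#D. \<forall>a b. f \<noteq> Imp a b"
    and d: "derivable (repeat_mset n G) (repeat_mset n D)"
  shows "derivable G D"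
  using d
proof cases
  case id
  then have "G = D" using n by (simp add: repeat_mset_cancel1)
  then show ?thesis using derivable.id by simp
next
  case (imp_L G' psi phi)
  then have "Imp phi psi \<in># repeat_mset n G" by simp
  then have "Imp phi psi \<in># G" by (rule in_repeat)
  then show ?thesis using aG by blast
next
  case (imp_R phi psi D')
  then have "Imp phi psi \<in># repeat_mset n D" by simp
  then have "Imp phi psi \<in># D" by (rule in_repeat)
  then show ?thesis using aD by blast
next
  case (box k G1 G0 ps D')
  let ?Phi = "image_mset snd (mset ps)"
  have bp: "BP k G1 ?Phi"
    by (rule BP_of_rule[OF box(3) box(4) box(5) box(6)])
  have hG: "repeat_mset n G = D' + image_mset Box G1" using box(1) .
  have hD: "repeat_mset n D = image_mset Box ?Phi + D'" using box(2) unfolding box_list_mset .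
  define Gv where "Gv = filter_mset (\<lambda>f. \<not> isBox f) G"
  define A where "A = image_mset unbox (filter_mset isBox G)"
  define Dv where "Dv = filter_mset (\<lambda>f. \<not> isBox f) D"
  define B where "B = image_mset unbox (filter_mset isBox D)"
  define Db where "Db = image_mset unbox (filter_mset isBox D')"
  have G: "G = Gv + image_mset Box A" unfolding Gv_def A_def by (rule decomp)
  have D: "D = Dv + image_mset Box B" unfolding Dv_def B_def by (rule decomp)
  have D': "D' = filter_mset (\<lambda>f. \<not> isBox f) D' + image_mset Box Db" unfolding Db_def by (rule decomp)
  have "image_mset unbox (filter_mset isBox (repeat_mset n G)) = image_mset unbox (filter_mset isBox (D' + image_mset Box G1))"
    using hG by simp
  then have e1: "repeat_mset n A = Db + G1"
    unfolding A_def Db_def by (simp add: filter_repeat image_repeat filter_box_image unbox_box)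
  have "image_mset unbox (filter_mset isBox (repeat_mset n D)) = image_mset unbox (filter_mset isBox (image_mset Box ?Phi + D'))"
    using hD by simp
  then have e2: "repeat_mset n B = ?Phi + Db"
    unfolding B_def Db_def by (simp add: filter_repeat image_repeat filter_box_image unbox_box)
  have "filter_mset (\<lambda>f. \<not> isBox f) (repeat_mset n G) = filter_mset (\<lambda>f. \<not> isBox f) (repeat_mset n D)"
    using hG hD by (simp add: filter_nbox_image)
  then have "repeat_mset n Gv = repeat_mset n Dv" unfolding Gv_def Dv_def by (simp add: filter_repeat)
  then have GD: "Gv = Dv" using n by (simp add: repeat_mset_cancel1)
  have "BP k (G1 + Db) (?Phi + Db)" using bp by (rule BP_ext)
  then have "BP k (repeat_mset n A) (repeat_mset n B)" using e1 e2 by (simp add: add_ac)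
  then have "BP (n * k) A B" by (rule BP_root[OF n])
  then have "derivable (Gv + image_mset Box A) (image_mset Box B + Gv)" by (rule BP_box)
  then show ?thesis using G D GD by (simp add: add_ac)
qed

definition wsz :: "fm multiset \<Rightarrow> fm multiset \<Rightarrow> nat" where
  "wsz G D = sum_mset (image_mset size G) + sum_mset (image_mset size D)"

lemma sc_gen: "n \<ge> 1 \<Longrightarrow> derivable (repeat_mset n G) (repeat_mset n D) \<Longrightarrow> derivable G D"
proof (induction "wsz G D" arbitrary: G D rule: less_induct)
  case less
  show ?case
  proof (cases "\<exists>a b X. G = add_mset (Imp a b) X")
    case True
    then obtain a b X where X: "G = add_mset (Imp a b) X" by blast
    have "derivable (repeat_mset n X + replicate_mset n (Imp a b)) (repeat_mset n D)"
      using less.prems(2) X by (simp add: add_ac)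
    then have "derivable (repeat_mset n X + replicate_mset n b) (replicate_mset n a + repeat_mset n D)"
      by (rule invL_rep)
    then have "derivable (repeat_mset n (add_mset b X)) (repeat_mset n (add_mset a D))"
      by (simp add: add_ac)
    moreover have "wsz (add_mset b X) (add_mset a D) < wsz G D"
      unfolding wsz_def X by simp
    ultimately have "derivable (add_mset b X) (add_mset a D)" using less.hyps less.prems(1) by blast
    then have "derivable (X + {#b#}) ({#a#} + D)" by simp
    then have "derivable (X + {#Imp a b#}) D" by (rule derivable.imp_L)
    then show ?thesis using X by simp
  next
    case F1: False
    show ?thesis
    proof (cases "\<exists>a b Y. D = add_mset (Imp a b) Y")
      case True
      then obtain a b Y where Y: "D = add_mset (Imp a b) Y" by blast
      have "derivable (repeat_mset n G) (replicate_mset n (Imp a b) + repeat_mset n Y)"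
        using less.prems(2) Y by (simp add: add_ac)
      then have "derivable (repeat_mset n G + replicate_mset n a) (replicate_mset n b + repeat_mset n Y)"
        by (rule invR_rep)
      then have "derivable (repeat_mset n (add_mset a G)) (repeat_mset n (add_mset b Y))"
        by (simp add: add_ac)
      moreover have "wsz (add_mset a G) (add_mset b Y) < wsz G D"
        unfolding wsz_def Y by simp
      ultimately have "derivable (add_mset a G) (add_mset b Y)" using less.hyps less.prems(1) by blast
      then have "derivable (G + {#a#}) ({#b#} + Y)" by simp
      then have "derivable G ({#Imp a b#} + Y)" by (rule derivable.imp_R)
      then show ?thesis using Y by simp
    next
      case False
      have aG: "\<forall>f\<in>#G. \<forall>a b. f \<noteq> Imp a b"
        using F1 by (metis multi_member_split)
      have aD: "\<forall>f\<in>#D. \<forall>a b. f \<noteq> Imp a b"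
        using False by (metis multi_member_split)
      show ?thesis by (rule atomic[OF less.prems(1) aG aD less.prems(2)])
    qed
  qed
qed

theorem lemma4p5:
  shows "(\<forall>G D P S. derivable G D \<longrightarrow> derivable P S \<longrightarrow> derivable (G + P) (S + D))
       \<and> (\<forall>n G D. n \<ge> 2 \<longrightarrow> derivable (mrep n G) (mrep n D) \<longrightarrow> derivable G D)"
proof (intro conjI allI impI)
  fix G D P S assume "derivable G D" "derivable P S"
  then show "derivable (G + P) (S + D)" by (rule mix)
next
  fix n G D assume "2 \<le> n" "derivable (mrep n G) (mrep n D)"
  then show "derivable G D" using sc_gen[of n G D] by (simp add: mrep_def)
qed

end
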